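(* Let $(\mathcal{F}_t)$ be a filtration. Let $\varepsilon_t = \sigma_t z_t$ with $\sigma_t = \exp(H_t)$, $H_t = \bar{H}_t + h_t$, where $\bar{H}_t = E\{H_t\mid\mathcal{F}_{t-1}\}$ is $\mathcal{F}_{t-1}$-measurable, $(h_t)$ is i.i.d. with Laplace density $\frac{1}{2\Delta}\exp(-|x|/\Delta)$, $\Delta = E|h_t|>0$, and $(z_t)$ is i.i.d. $\mathcal{N}(0,1)$, with $z_t$, $h_t$ mutually independent and independent of $\mathcal{F}_{t-1}$. For $\Lambda > 0$ put $\widetilde{\Lambda}_t = \Lambda/(\sqrt{2}e^{\bar{H}_t})$. Then $$P\{|\varepsilon_t| \ge \Lambda \mid \mathcal{F}_{t-1}\} = \frac{1}{2\sqrt{\pi}}\left(\gamma\!\left(\frac{1+1/\Delta}{2}, \widetilde{\Lambda}_t^2\right)\widetilde{\Lambda}_t^{-1/\Delta} - \Gamma\!\left(\frac{1-1/\Delta}{2}, \widetilde{\Lambda}_t^2\right)\widetilde{\Lambda}_t^{1/\Delta}\right) + \operatorname{erfc}(\widetilde{\Lambda}_t).$$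
   Context: $\Gamma(a,b) = \int_b^\infty x^{a-1}e^{-x}\,dx$ (upper incomplete gamma function), $\gamma(a,b) = \int_0^b x^{a-1}e^{-x}\,dx$ (lower incomplete gamma function), and $\operatorname{erfc}(x) = \frac{2}{\sqrt{\pi}}\int_x^\infty e^{-u^2}\,du$ is the complementary error function. *)

theory Defs
  imports "HOL-Probability.Probability"
begin

definition upper_inc_gamma :: "real \<Rightarrow> real \<Rightarrow> real" where
  "upper_inc_gamma a b = (LBINT x:{b..}. x powr (a - 1) * exp (- x))"

definition lower_inc_gamma :: "real \<Rightarrow> real \<Rightarrow> real" where
  "lower_inc_gamma a b = (LBINT x:{0..b}. x powr (a - 1) * exp (- x))"

definition erfc :: "real \<Rightarrow> real" where
  "erfc x = 2 / sqrt pi * (LBINT u:{x..}. exp (- (u\<^sup>2)))"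

definition laplace_density :: "real \<Rightarrow> real \<Rightarrow> real" where
  "laplace_density \<Delta> x = 1 / (2 * \<Delta>) * exp (- \<bar>x\<bar> / \<Delta>)"

end

theory Submission
  imports Defs "HOL-Real_Asymp.Real_Asymp"
begin



lemma lap_tail_pos:
  assumes D: "\<Delta> > 0" and s: "0 \<le> s"
  shows "(\<integral>\<^sup>+b. ennreal (laplace_density \<Delta> b) * indicator {s..} b \<partial>lborel) = ennreal (exp (-s/\<Delta>)/2)"
proof -
  have "(\<integral>\<^sup>+b. ennreal (laplace_density \<Delta> b) * indicator {s..} b \<partial>lborel)
      = (\<integral>\<^sup>+b. ennreal (exp (-b/\<Delta>)/(2*\<Delta>)) * indicator {s..} b \<partial>lborel)"
    using s by (intro nn_integral_cong) (auto simp: laplace_density_def indicator_def)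
  also have "\<dots> = ennreal (0 - (- exp (-s/\<Delta>)/2))"
  proof (rule nn_integral_FTC_atLeast)
    show "(\<lambda>x. exp (-x/\<Delta>)/(2*\<Delta>)) \<in> borel_measurable borel" by measurable
    show "((\<lambda>x. - exp (-x/\<Delta>)/2) has_real_derivative exp (-x/\<Delta>)/(2*\<Delta>)) (at x)" for x
      using D by (auto intro!: derivative_eq_intros simp: field_simps)
    show "0 \<le> exp (-x/\<Delta>)/(2*\<Delta>)" for x using D by simp
    show "((\<lambda>x. - exp (-x/\<Delta>)/2) \<longlongrightarrow> 0) at_top" using D by real_asymp
  qed
  finally show ?thesis by simp
qed

lemma lap_tail:
  assumes D: "\<Delta> > 0"
  shows "(\<integral>\<^sup>+b. ennreal (laplace_density \<Delta> b) * indicator {s..} b \<partial>lborel)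
      = ennreal (if 0 \<le> s then exp (-s/\<Delta>)/2 else 1 - exp (s/\<Delta>)/2)"
proof (cases "0 \<le> s")
  case True then show ?thesis using lap_tail_pos[OF D True] by simp
next
  case False
  have "(\<integral>\<^sup>+b. ennreal (laplace_density \<Delta> b) * indicator {s..} b \<partial>lborel)
     = (\<integral>\<^sup>+b. ennreal (laplace_density \<Delta> b) * indicator {s..0} b + ennreal (laplace_density \<Delta> b) * indicator {0<..} b \<partial>lborel)"
    using False by (intro nn_integral_cong) (auto simp: indicator_def)
  also have "\<dots> = (\<integral>\<^sup>+b. ennreal (laplace_density \<Delta> b) * indicator {s..0} b \<partial>lborel) + (\<integral>\<^sup>+b. ennreal (laplace_density \<Delta> b) * indicator {0<..} b \<partial>lborel)"
    by (rule nn_integral_add) (auto simp: laplace_density_def)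
  also have "(\<integral>\<^sup>+b. ennreal (laplace_density \<Delta> b) * indicator {0<..} b \<partial>lborel) = (\<integral>\<^sup>+b. ennreal (laplace_density \<Delta> b) * indicator {0..} b \<partial>lborel)"
    by (intro nn_integral_cong_AE) (use AE_lborel_singleton[of 0] in \<open>eventually_elim, auto simp: indicator_def\<close>)
  also have "\<dots> = ennreal (1/2)" using lap_tail_pos[OF D, of 0] by simp
  also have "(\<integral>\<^sup>+b. ennreal (laplace_density \<Delta> b) * indicator {s..0} b \<partial>lborel)
      = (\<integral>\<^sup>+b. ennreal (exp (b/\<Delta>)/(2*\<Delta>)) * indicator {s..0} b \<partial>lborel)"
    by (intro nn_integral_cong) (auto simp: laplace_density_def indicator_def)
  also have "\<dots> = ennreal (exp (0/\<Delta>)/2 - exp (s/\<Delta>)/2)"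
  proof (rule nn_integral_FTC_Icc)
    show "(\<lambda>x. exp (x/\<Delta>)/(2*\<Delta>)) \<in> borel_measurable borel" by measurable
    show "((\<lambda>x. exp (x/\<Delta>)/2) has_real_derivative exp (x/\<Delta>)/(2*\<Delta>)) (at x)" for x
      using D by (auto intro!: derivative_eq_intros simp: field_simps)
    show "0 \<le> exp (x/\<Delta>)/(2*\<Delta>)" for x using D by simp
    show "s \<le> 0" using False by simp
  qed
  also have "ennreal (exp (0/\<Delta>)/2 - exp (s/\<Delta>)/2) + ennreal (1/2) = ennreal (1 - exp (s/\<Delta>)/2)"
  proof -
    have "exp (s/\<Delta>) \<le> 1" using False D by (simp add: divide_nonpos_pos)
    then show ?thesis by (subst ennreal_plus[symmetric]) auto
  qed
  finally show ?thesis using False by simp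
qed




lemma integrable_gauss: "integrable lborel (\<lambda>x::real. exp (- x\<^sup>2))"
proof -
  have eq: "(\<lambda>x::real. exp (- x\<^sup>2)) = (\<lambda>x. sqrt (2*pi) * std_normal_density (0 + sqrt 2 * x))"
    by (simp add: normal_density_def power_mult_distrib)
  show ?thesis unfolding eq
    by (intro integrable_mult_right lborel_integrable_real_affine) auto
qed

lemma powr_sq_id:
  fixes u e :: real assumes "u > 0"
  shows "(u\<^sup>2) powr e * exp (- (u\<^sup>2)) * (2 * u) = 2 * (u powr (2*e + 1) * exp (- u\<^sup>2))"
proof -
  have "u\<^sup>2 = u powr 2" using powr_realpow[OF assms, of 2] by simp
  then have "(u\<^sup>2) powr e = u powr (2*e)" by (simp only: powr_powr)
  moreover have "u powr (2*e) * u = u powr (2*e+1)" using assms by (simp add: powr_add)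
  ultimately show ?thesis by (simp add: algebra_simps)
qed

lemma S1:
  fixes \<beta> L :: real assumes b: "\<beta> > 0" and L: "L > 0"
  shows "lower_inc_gamma ((1+\<beta>)/2) (L\<^sup>2) = 2 * (LBINT u=0..L. u powr \<beta> * exp (- u\<^sup>2))"
proof -
  define f where "f x = x powr ((1+\<beta>)/2 - 1) * exp (- x)" for x :: real
  have "(LBINT x=ereal 0..ereal (L\<^sup>2). f x) = (LBINT u=ereal 0..ereal L. f (u\<^sup>2) * (2 * u))"
  proof (rule interval_integral_substitution_nonneg(2))
    show "ereal 0 < ereal L" using L by simp
    show "((\<lambda>u. u\<^sup>2) has_real_derivative 2 * x) (at x)" for x by (auto intro!: derivative_eq_intros)
    show "isCont f (x\<^sup>2)" if "ereal 0 < ereal x" "ereal x < ereal L" for x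
      using that unfolding f_def by (auto intro!: continuous_intros)
    show "isCont (\<lambda>u::real. 2 * u) x" for x by (auto intro!: continuous_intros)
    show "0 \<le> f (x\<^sup>2)" for x unfolding f_def by simp
    show "0 \<le> 2 * x" if "ereal 0 \<le> ereal x" "ereal x \<le> ereal L" for x using that by simp
    show "((ereal \<circ> (\<lambda>u. u\<^sup>2) \<circ> real_of_ereal) \<longlongrightarrow> ereal 0) (at_right (ereal 0))"
      by (auto simp: ereal_tendsto_simps intro!: tendsto_eq_intros)
    show "((ereal \<circ> (\<lambda>u. u\<^sup>2) \<circ> real_of_ereal) \<longlongrightarrow> ereal (L\<^sup>2)) (at_left (ereal L))"
      by (auto simp: ereal_tendsto_simps intro!: tendsto_eq_intros)
    show "set_integrable lborel (einterval (ereal 0) (ereal L)) (\<lambda>u. f (u\<^sup>2) * (2 * u))"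
    proof (rule set_integrable_bound[where f="\<lambda>_. 2 * L powr \<beta>"])
      show "set_integrable lborel (einterval (ereal 0) (ereal L)) (\<lambda>_. 2 * L powr \<beta>)"
        unfolding set_integrable_def using L
        by (simp add: integrable_real_indicator emeasure_lborel_Ioo)
      show "set_borel_measurable lborel (einterval (ereal 0) (ereal L)) (\<lambda>u. f (u\<^sup>2) * (2 * u))"
        unfolding set_borel_measurable_def f_def by measurable
      show "AE x in lborel. x \<in> einterval (ereal 0) (ereal L) \<longrightarrow> norm (f (x\<^sup>2) * (2 * x)) \<le> norm (2 * L powr \<beta>)"
      proof (intro AE_I2 impI)
        fix x assume "x \<in> einterval (ereal 0) (ereal L)"
        then have x: "0 < x" "x < L" by auto
        have "f (x\<^sup>2) * (2 * x) = 2 * (x powr \<beta> * exp (- x\<^sup>2))"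
          unfolding f_def using powr_sq_id[OF x(1)] by (simp add: field_simps)
        moreover have "x powr \<beta> * exp (- x\<^sup>2) \<le> L powr \<beta> * 1"
          using x b by (intro mult_mono powr_mono2) auto
        moreover have "0 \<le> x powr \<beta> * exp (- x\<^sup>2)" by simp
        ultimately show "norm (f (x\<^sup>2) * (2 * x)) \<le> norm (2 * L powr \<beta>)"
          by (simp only: real_norm_def; smt (verit))
      qed
    qed
  qed
  also have "\<dots> = (LBINT u=ereal 0..ereal L. 2 * (u powr \<beta> * exp (- u\<^sup>2)))"
  proof (intro interval_integral_cong)
    fix x assume "x \<in> einterval (min (ereal 0) (ereal L)) (max (ereal 0) (ereal L))"
    then have "x > 0" using L by (auto simp: einterval_iff)
    then show "f (x\<^sup>2) * (2 * x) = 2 * (x powr \<beta> * exp (- x\<^sup>2))"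
      unfolding f_def using powr_sq_id[of x "(1+\<beta>)/2 - 1"] by (simp add: field_simps)
  qed
  also have "\<dots> = 2 * (LBINT u=ereal 0..ereal L. u powr \<beta> * exp (- u\<^sup>2))"
    by (rule interval_lebesgue_integral_mult_right)
  finally have *: "(LBINT x=ereal 0..ereal (L\<^sup>2). f x) = 2 * (LBINT u=ereal 0..ereal L. u powr \<beta> * exp (- u\<^sup>2))" .
  have "lower_inc_gamma ((1+\<beta>)/2) (L\<^sup>2) = (LBINT x:{0..L\<^sup>2}. f x)"
    unfolding lower_inc_gamma_def f_def ..
  also have "\<dots> = (LBINT x=ereal 0..ereal (L\<^sup>2). f x)"
    by (rule interval_integral_Icc[symmetric]) simp
  finally show ?thesis using * by (simp only: zero_ereal_def)
qed

lemma Ioi_Ici_integral: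
  fixes f :: "real \<Rightarrow> real"
  shows "(LBINT x:{a<..}. f x) = (LBINT x:{a..}. f x)"
proof (rule set_integral_discrete_difference[where X="{a}"])
  show "countable {a}" by simp
  show "({a<..} - {a..}) \<union> ({a..} - {a<..}) \<subseteq> {a}" by auto
  show "emeasure lborel {x} = 0" if "x \<in> {a}" for x by simp
  show "{x} \<in> sets lborel" if "x \<in> {a}" for x by simp
qed

lemma S2:
  fixes \<beta> L :: real assumes b: "\<beta> > 0" and L: "L > 0"
  shows "upper_inc_gamma ((1-\<beta>)/2) (L\<^sup>2) = 2 * (LBINT u=L..\<infinity>. u powr (-\<beta>) * exp (- u\<^sup>2))"
    "set_integrable lborel (einterval L \<infinity>) (\<lambda>u. u powr (-\<beta>) * exp (- u\<^sup>2))"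
proof -
  define f where "f x = x powr ((1-\<beta>)/2 - 1) * exp (- x)" for x :: real
  have eq: "f (x\<^sup>2) * (2 * x) = 2 * (x powr (-\<beta>) * exp (- x\<^sup>2))" if "x > 0" for x
    unfolding f_def using powr_sq_id[OF that, of "(1-\<beta>)/2 - 1"] by (simp add: field_simps)
  have bnd: "set_integrable lborel (einterval L \<infinity>) (\<lambda>u. 2 * (L powr (-\<beta>) * exp (- u\<^sup>2)))"
    unfolding set_integrable_def
    by (intro integrable_mult_indicator integrable_mult_right integrable_gauss) auto
  have pt: "norm (2 * (x powr (-\<beta>) * exp (- x\<^sup>2))) \<le> norm (2 * (L powr (-\<beta>) * exp (- x\<^sup>2)))" if "L < x" for x
  proof -
    have "x powr (-\<beta>) \<le> L powr (-\<beta>)" using that L b by (intro powr_mono2') auto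
    then show ?thesis by (simp add: abs_mult)
  qed
  have int2: "set_integrable lborel (einterval L \<infinity>) (\<lambda>u. 2 * (u powr (-\<beta>) * exp (- u\<^sup>2)))"
  proof (rule set_integrable_bound[OF bnd])
    show "set_borel_measurable lborel (einterval (ereal L) \<infinity>) (\<lambda>u. 2 * (u powr - \<beta> * exp (- u\<^sup>2)))"
      unfolding set_borel_measurable_def by measurable
    show "AE x in lborel. x \<in> einterval (ereal L) \<infinity> \<longrightarrow> norm (2 * (x powr - \<beta> * exp (- x\<^sup>2))) \<le> norm (2 * (L powr - \<beta> * exp (- x\<^sup>2)))"
      using pt by (auto simp: einterval_iff)
  qed
  then show "set_integrable lborel (einterval L \<infinity>) (\<lambda>u. u powr (-\<beta>) * exp (- u\<^sup>2))"
    using int2 by simp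
  have "(LBINT x=ereal (L\<^sup>2)..\<infinity>. f x) = (LBINT u=ereal L..\<infinity>. f (u\<^sup>2) * (2 * u))"
  proof (rule interval_integral_substitution_nonneg(2))
    show "ereal L < \<infinity>" by simp
    show "((\<lambda>u. u\<^sup>2) has_real_derivative 2 * x) (at x)" for x by (auto intro!: derivative_eq_intros)
    show "isCont f (x\<^sup>2)" if "ereal L < ereal x" "ereal x < \<infinity>" for x
      using that L unfolding f_def by (auto intro!: continuous_intros)
    show "isCont (\<lambda>u::real. 2 * u) x" for x by (auto intro!: continuous_intros)
    show "0 \<le> f (x\<^sup>2)" for x unfolding f_def by simp
    show "0 \<le> 2 * x" if "ereal L \<le> ereal x" "ereal x \<le> \<infinity>" for x using that L by simp
    show "((ereal \<circ> (\<lambda>u. u\<^sup>2) \<circ> real_of_ereal) \<longlongrightarrow> ereal (L\<^sup>2)) (at_right (ereal L))"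
      by (auto simp: ereal_tendsto_simps intro!: tendsto_eq_intros)
    show "((ereal \<circ> (\<lambda>u. u\<^sup>2) \<circ> real_of_ereal) \<longlongrightarrow> \<infinity>) (at_left \<infinity>)"
      unfolding ereal_tendsto_simps by (simp add: filterlim_pow_at_top filterlim_ident)
    show "set_integrable lborel (einterval (ereal L) \<infinity>) (\<lambda>u. f (u\<^sup>2) * (2 * u))"
    proof (rule set_integrable_bound[OF bnd])
      show "set_borel_measurable lborel (einterval (ereal L) \<infinity>) (\<lambda>u. f (u\<^sup>2) * (2 * u))"
        unfolding set_borel_measurable_def f_def by measurable
      show "AE x in lborel. x \<in> einterval (ereal L) \<infinity> \<longrightarrow> norm (f (x\<^sup>2) * (2 * x)) \<le> norm (2 * (L powr - \<beta> * exp (- x\<^sup>2)))"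
      proof (intro AE_I2 impI)
        fix x assume "x \<in> einterval (ereal L) \<infinity>"
        then have x: "L < x" by auto
        then have "f (x\<^sup>2) * (2 * x) = 2 * (x powr (-\<beta>) * exp (- x\<^sup>2))" using L by (intro eq) auto
        then show "norm (f (x\<^sup>2) * (2 * x)) \<le> norm (2 * (L powr - \<beta> * exp (- x\<^sup>2)))"
          using pt[OF x] by (simp only:)
      qed
    qed
  qed
  also have "\<dots> = (LBINT u=ereal L..\<infinity>. 2 * (u powr (-\<beta>) * exp (- u\<^sup>2)))"
  proof (intro interval_integral_cong)
    fix x assume "x \<in> einterval (min (ereal L) \<infinity>) (max (ereal L) \<infinity>)"
    then have "x > 0" using L by (auto simp: einterval_iff)
    then show "f (x\<^sup>2) * (2 * x) = 2 * (x powr (-\<beta>) * exp (- x\<^sup>2))" by (rule eq)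
  qed
  also have "\<dots> = 2 * (LBINT u=ereal L..\<infinity>. u powr (-\<beta>) * exp (- u\<^sup>2))"
    by (rule interval_lebesgue_integral_mult_right)
  finally have *: "(LBINT x=ereal (L\<^sup>2)..\<infinity>. f x) = 2 * (LBINT u=ereal L..\<infinity>. u powr (-\<beta>) * exp (- u\<^sup>2))" .
  have "upper_inc_gamma ((1-\<beta>)/2) (L\<^sup>2) = (LBINT x:{L\<^sup>2..}. f x)"
    unfolding upper_inc_gamma_def f_def ..
  also have "\<dots> = (LBINT x=ereal (L\<^sup>2)..\<infinity>. f x)"
    by (simp only: interval_integral_to_infinity_eq Ioi_Ici_integral)
  finally show "upper_inc_gamma ((1-\<beta>)/2) (L\<^sup>2) = 2 * (LBINT u=L..\<infinity>. u powr (-\<beta>) * exp (- u\<^sup>2))"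
    using * by simp
qed




definition Phi :: "real \<Rightarrow> real \<Rightarrow> real \<Rightarrow> real" where
  "Phi \<beta> L u = (if \<bar>u\<bar> \<le> L then (\<bar>u\<bar>/L) powr \<beta> / 2 else 1 - (L/\<bar>u\<bar>) powr \<beta> / 2)"

lemma Phi_bounds: assumes "\<beta> > 0" "L > 0" shows "0 \<le> Phi \<beta> L u" "Phi \<beta> L u \<le> 1"
proof -
  have a: "(\<bar>u\<bar>/L) powr \<beta> \<le> 1" if "\<bar>u\<bar> \<le> L" using that assms by (intro powr_le1) auto
  have b: "(L/\<bar>u\<bar>) powr \<beta> \<le> 1" if "\<not> \<bar>u\<bar> \<le> L" using that assms by (intro powr_le1) auto
  show "0 \<le> Phi \<beta> L u" "Phi \<beta> L u \<le> 1" unfolding Phi_def using a b by auto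
qed

lemma layerB1:
  assumes D: "\<Delta> > 0" and Lam: "\<Lambda> > 0"
    and P: "prob_space (density lborel (\<lambda>x. ennreal (laplace_density \<Delta> x)))"
  shows "(\<integral>y. (if \<Lambda> \<le> exp (c + snd y) * \<bar>fst y\<bar> then 1 else 0)
      \<partial>(density lborel (\<lambda>x. ennreal (std_normal_density x)) \<Otimes>\<^sub>M density lborel (\<lambda>x. ennreal (laplace_density \<Delta> x))))
    = enn2real (\<integral>\<^sup>+u. ennreal (exp (- u\<^sup>2) / sqrt pi * Phi (1/\<Delta>) (\<Lambda> / (sqrt 2 * exp c)) u) \<partial>lborel)"
proof -
  define K where "K = \<Lambda> / exp c"
  define L where "L = \<Lambda> / (sqrt 2 * exp c)"
  have K: "K > 0" and L: "L > 0" using Lam by (auto simp: K_def L_def)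
  have KL: "K = sqrt 2 * L" by (simp add: K_def L_def)
  define dN where "dN = density lborel (\<lambda>x. ennreal (std_normal_density x))"
  define dL where "dL = density lborel (\<lambda>x. ennreal (laplace_density \<Delta> x))"
  interpret dL: prob_space dL unfolding dL_def by (rule P)
  have lapM[measurable]: "laplace_density \<Delta> \<in> borel_measurable borel" unfolding laplace_density_def by measurable
  define ind where "ind y = (if \<Lambda> \<le> exp (c + snd y) * \<bar>fst y\<bar> then 1 else 0 :: real)" for y :: "real \<times> real"
  have indM[measurable]: "ind \<in> borel_measurable (borel \<Otimes>\<^sub>M borel)" unfolding ind_def by measurable
  define Psi where "Psi a = (if \<bar>a\<bar> \<le> K then (\<bar>a\<bar>/K) powr (1/\<Delta>) / 2 else 1 - (K/\<bar>a\<bar>) powr (1/\<Delta>) / 2)" for a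
  have PsiM[measurable]: "Psi \<in> borel_measurable borel" unfolding Psi_def by measurable
  have Psi_nn: "0 \<le> Psi a" for a
    using Phi_bounds(1)[of "1/\<Delta>" K a] D K by (simp add: Psi_def Phi_def)
  have inner: "(\<integral>\<^sup>+b. ennreal (laplace_density \<Delta> b) * ennreal (ind (a, b)) \<partial>lborel) = ennreal (Psi a)" if "a \<noteq> 0" for a
  proof -
    have "ennreal (ind (a, b)) = indicator {ln (K/\<bar>a\<bar>)..} b" for b
    proof -
      have "\<Lambda> \<le> exp (c + b) * \<bar>a\<bar> \<longleftrightarrow> K/\<bar>a\<bar> \<le> exp b"
        using that by (simp add: K_def exp_add field_simps)
      also have "\<dots> \<longleftrightarrow> ln (K/\<bar>a\<bar>) \<le> ln (exp b)"
        using that K by (subst ln_le_cancel_iff) auto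
      also have "\<dots> \<longleftrightarrow> ln (K/\<bar>a\<bar>) \<le> b" by simp
      finally show ?thesis by (simp add: ind_def indicator_def)
    qed
    then have "(\<integral>\<^sup>+b. ennreal (laplace_density \<Delta> b) * ennreal (ind (a, b)) \<partial>lborel)
        = (\<integral>\<^sup>+b. ennreal (laplace_density \<Delta> b) * indicator {ln (K/\<bar>a\<bar>)..} b \<partial>lborel)" by simp
    also have "\<dots> = ennreal (if 0 \<le> ln (K/\<bar>a\<bar>) then exp (- ln (K/\<bar>a\<bar>)/\<Delta>)/2 else 1 - exp (ln (K/\<bar>a\<bar>)/\<Delta>)/2)"
      by (rule lap_tail[OF D])
    also have "\<dots> = ennreal (Psi a)"
    proof -
      have "0 \<le> ln (K/\<bar>a\<bar>) \<longleftrightarrow> \<bar>a\<bar> \<le> K" using that K by (simp add: field_simps)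
      moreover have "exp (- ln (K/\<bar>a\<bar>)/\<Delta>) = (\<bar>a\<bar>/K) powr (1/\<Delta>)"
        using that K by (simp add: powr_def ln_div)
      moreover have "exp (ln (K/\<bar>a\<bar>)/\<Delta>) = (K/\<bar>a\<bar>) powr (1/\<Delta>)"
        using that K by (simp add: powr_def)
      ultimately show ?thesis by (simp add: Psi_def)
    qed
    finally show ?thesis .
  qed
  have "(\<integral>y. ind y \<partial>(dN \<Otimes>\<^sub>M dL)) = enn2real (\<integral>\<^sup>+y. ennreal (ind y) \<partial>(dN \<Otimes>\<^sub>M dL))"
    by (rule integral_eq_nn_integral) (auto simp: dN_def dL_def ind_def)
  also have "(\<integral>\<^sup>+y. ennreal (ind y) \<partial>(dN \<Otimes>\<^sub>M dL)) = (\<integral>\<^sup>+a. \<integral>\<^sup>+b. ennreal (ind (a, b)) \<partial>dL \<partial>dN)"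
    by (rule dL.nn_integral_fst[symmetric]) (simp add: dN_def dL_def)
  also have "\<dots> = (\<integral>\<^sup>+a. (\<integral>\<^sup>+b. ennreal (laplace_density \<Delta> b) * ennreal (ind (a, b)) \<partial>lborel) \<partial>dN)"
    unfolding dL_def by (intro nn_integral_cong) (simp add: nn_integral_density)
  also have "\<dots> = (\<integral>\<^sup>+a. ennreal (std_normal_density a) * (\<integral>\<^sup>+b. ennreal (laplace_density \<Delta> b) * ennreal (ind (a, b)) \<partial>lborel) \<partial>lborel)"
    unfolding dN_def by (rule nn_integral_density) measurable
  also have "\<dots> = (\<integral>\<^sup>+a. ennreal (std_normal_density a * Psi a) \<partial>lborel)"
    by (intro nn_integral_cong_AE) (use AE_lborel_singleton[of 0] in \<open>eventually_elim, auto simp: inner ennreal_mult Psi_nn\<close>)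
  also have "\<dots> = ennreal \<bar>sqrt 2\<bar> * (\<integral>\<^sup>+u. ennreal (std_normal_density (0 + sqrt 2 * u) * Psi (0 + sqrt 2 * u)) \<partial>lborel)"
    by (rule nn_integral_real_affine) auto
  also have "\<dots> = (\<integral>\<^sup>+u. ennreal (exp (- u\<^sup>2) / sqrt pi * Phi (1/\<Delta>) L u) \<partial>lborel)"
  proof -
    have "sqrt 2 * (std_normal_density (sqrt 2 * u) * Psi (sqrt 2 * u)) = exp (- u\<^sup>2) / sqrt pi * Phi (1/\<Delta>) L u" for u
    proof -
      have "Psi (sqrt 2 * u) = Phi (1/\<Delta>) L u"
        by (simp add: Psi_def Phi_def KL abs_mult)
      moreover have "sqrt 2 * std_normal_density (sqrt 2 * u) = exp (- u\<^sup>2) / sqrt pi"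
        by (simp add: normal_density_def power_mult_distrib real_sqrt_mult)
      ultimately show ?thesis by (metis mult.assoc times_divide_eq_left)
    qed
    then have "ennreal (sqrt 2) * ennreal (std_normal_density (sqrt 2 * u) * Psi (sqrt 2 * u)) = ennreal (exp (- u\<^sup>2) / sqrt pi * Phi (1/\<Delta>) L u)" for u
      by (subst ennreal_mult[symmetric]) (auto simp: Psi_nn)
    then show ?thesis
      by (subst nn_integral_cmult[symmetric]) (auto intro!: nn_integral_cong)
  qed
  finally show ?thesis unfolding dN_def dL_def ind_def L_def .
qed

definition Gform :: "real \<Rightarrow> real \<Rightarrow> real" where
  "Gform \<Delta> L = 1 / (2 * sqrt pi) *
           (lower_inc_gamma ((1 + 1 / \<Delta>) / 2) (L\<^sup>2) * L powr (- 1 / \<Delta>)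
            - upper_inc_gamma ((1 - 1 / \<Delta>) / 2) (L\<^sup>2) * L powr (1 / \<Delta>))
         + erfc L"

lemma integrable_interval:
  fixes f :: "real \<Rightarrow> real"
  assumes "integrable lborel f"
  shows "interval_lebesgue_integrable lborel a b f"
  using assms integrable_mult_indicator[of _ lborel f]
  by (auto simp: interval_lebesgue_integrable_def set_integrable_def)

lemma layerB2:
  assumes D: "\<Delta> > 0" and L: "L > 0"
  shows "enn2real (\<integral>\<^sup>+u. ennreal (exp (- u\<^sup>2) / sqrt pi * Phi (1/\<Delta>) L u) \<partial>lborel) = Gform \<Delta> L"
proof -
  define \<beta> where "\<beta> = 1/\<Delta>"
  have b: "\<beta> > 0" using D by (simp add: \<beta>_def)
  define W where "W u = exp (- u\<^sup>2) / sqrt pi * Phi \<beta> L u" for u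
  have WM[measurable]: "W \<in> borel_measurable borel" unfolding W_def Phi_def by measurable
  have Wnn: "0 \<le> W u" for u unfolding W_def using Phi_bounds[OF b L, of u] by simp
  have Wint: "integrable lborel W"
  proof (rule Bochner_Integration.integrable_bound[OF integrable_divide[OF integrable_gauss, of "sqrt pi"]])
    show "W \<in> borel_measurable lborel" by simp
    show "AE x in lborel. norm (W x) \<le> norm (exp (- x\<^sup>2) / sqrt pi)"
      using Phi_bounds[OF b L] by (auto simp: W_def abs_mult intro!: mult_left_le divide_right_mono)
  qed
  have "enn2real (\<integral>\<^sup>+u. ennreal (W u) \<partial>lborel) = (\<integral>u. W u \<partial>lborel)"
    by (rule integral_eq_nn_integral[symmetric]) (auto simp: Wnn)
  also have "(\<integral>u. W u \<partial>lborel) = 2 * (LBINT u=0..\<infinity>. W u)"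
  proof -
    have "(\<integral>u. W u \<partial>lborel) = (LBINT u=-\<infinity>..\<infinity>. W u)"
      by (simp add: interval_lebesgue_integral_def set_lebesgue_integral_def)
    also have "\<dots> = (LBINT u=-\<infinity>..0. W u) + (LBINT u=0..\<infinity>. W u)"
      by (rule interval_integral_sum[symmetric]) (simp add: integrable_interval[OF Wint])
    also have "(LBINT u=-\<infinity>..0. W u) = (LBINT u=0..\<infinity>. W u)"
    proof -
      have Wsym: "(\<lambda>x. W (- x)) = W" by (simp add: W_def Phi_def fun_eq_iff)
      show ?thesis by (subst interval_integral_reflect) (simp add: Wsym)
    qed
    finally show ?thesis by simp
  qed
  also have "(LBINT u=0..\<infinity>. W u) = (LBINT u=0..L. W u) + (LBINT u=L..\<infinity>. W u)"
    by (rule interval_integral_sum[symmetric]) (simp add: integrable_interval[OF Wint])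
  also have "(LBINT u=0..L. W u) = L powr (-\<beta>) / (4 * sqrt pi) * lower_inc_gamma ((1 + \<beta>) / 2) (L\<^sup>2)"
  proof -
    have "(LBINT u=0..L. W u) = (LBINT u=0..L. L powr (-\<beta>) / (2 * sqrt pi) * (u powr \<beta> * exp (- u\<^sup>2)))"
    proof (rule interval_integral_cong)
      fix x assume "x \<in> einterval (min 0 (ereal L)) (max 0 (ereal L))"
      then have x: "0 < x" "x < L" using L by (auto simp: einterval_iff)
      have "(x / L) powr \<beta> = x powr \<beta> * L powr (-\<beta>)"
        using x L by (simp add: powr_divide powr_minus_divide)
      then show "W x = L powr (-\<beta>) / (2 * sqrt pi) * (x powr \<beta> * exp (- x\<^sup>2))"
        using x by (simp add: W_def Phi_def mult_ac)
    qed
    also have "\<dots> = L powr (-\<beta>) / (2 * sqrt pi) * (LBINT u=0..L. u powr \<beta> * exp (- u\<^sup>2))"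
      by (rule interval_lebesgue_integral_mult_right)
    also have "(LBINT u=0..L. u powr \<beta> * exp (- u\<^sup>2)) = lower_inc_gamma ((1 + \<beta>) / 2) (L\<^sup>2) / 2"
      using S1[OF b L] by simp
    finally show ?thesis by simp
  qed
  also have "(LBINT u=L..\<infinity>. W u) = erfc L / 2 - L powr \<beta> / (4 * sqrt pi) * upper_inc_gamma ((1 - \<beta>) / 2) (L\<^sup>2)"
  proof -
    have "(LBINT u=L..\<infinity>. W u) = (LBINT u=L..\<infinity>. exp (- u\<^sup>2) / sqrt pi - L powr \<beta> / (2 * sqrt pi) * (u powr (-\<beta>) * exp (- u\<^sup>2)))"
    proof (rule interval_integral_cong)
      fix x assume "x \<in> einterval (min (ereal L) \<infinity>) (max (ereal L) \<infinity>)"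
      then have x: "L < x" by (auto simp: einterval_iff)
      have "(L / x) powr \<beta> = L powr \<beta> * x powr (-\<beta>)"
        using x L by (simp add: powr_divide powr_minus_divide)
      then show "W x = exp (- x\<^sup>2) / sqrt pi - L powr \<beta> / (2 * sqrt pi) * (x powr (-\<beta>) * exp (- x\<^sup>2))"
        using x L by (simp add: W_def Phi_def field_simps)
    qed
    also have "\<dots> = (LBINT u=L..\<infinity>. exp (- u\<^sup>2) / sqrt pi) - (LBINT u=L..\<infinity>. L powr \<beta> / (2 * sqrt pi) * (u powr (-\<beta>) * exp (- u\<^sup>2)))"
    proof (rule interval_lebesgue_integral_diff(2))
      show "interval_lebesgue_integrable lborel (ereal L) \<infinity> (\<lambda>u. exp (- u\<^sup>2) / sqrt pi)"
        by (rule integrable_interval[OF integrable_divide[OF integrable_gauss]])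
      show "interval_lebesgue_integrable lborel (ereal L) \<infinity> (\<lambda>u. L powr \<beta> / (2 * sqrt pi) * (u powr (-\<beta>) * exp (- u\<^sup>2)))"
        using S2(2)[OF b L] by (simp add: interval_lebesgue_integrable_def)
    qed
    also have "(LBINT u=L..\<infinity>. exp (- u\<^sup>2) / sqrt pi) = erfc L / 2"
    proof -
      have "erfc L = 2 / sqrt pi * (LBINT u=L..\<infinity>. exp (- u\<^sup>2))"
        unfolding erfc_def by (simp only: interval_integral_to_infinity_eq Ioi_Ici_integral)
      then show ?thesis by simp
    qed
    also have "(LBINT u=L..\<infinity>. L powr \<beta> / (2 * sqrt pi) * (u powr (-\<beta>) * exp (- u\<^sup>2)))
        = L powr \<beta> / (2 * sqrt pi) * (upper_inc_gamma ((1 - \<beta>) / 2) (L\<^sup>2) / 2)"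
      using S2(1)[OF b L] by simp
    finally show ?thesis by simp
  qed
  finally have eq: "enn2real (\<integral>\<^sup>+u. ennreal (W u) \<partial>lborel) = 2 * (L powr (-\<beta>) / (4 * sqrt pi) * lower_inc_gamma ((1 + \<beta>) / 2) (L\<^sup>2) +
      (erfc L / 2 - L powr \<beta> / (4 * sqrt pi) * upper_inc_gamma ((1 - \<beta>) / 2) (L\<^sup>2)))" .
  have alg: "2 * (a / (4 * s) * g + (e / 2 - b / (4 * s) * G)) = 1 / (2 * s) * (g * a - G * b) + e"
    if "s > 0" for s a b g e G :: real
    using that by (simp add: field_simps)
  have m: "- 1 / \<Delta> = - \<beta>" by (simp add: \<beta>_def)
  show ?thesis
    using eq unfolding Gform_def m alg[OF real_sqrt_gt_zero[OF pi_gt_zero]]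
    by (simp add: W_def \<beta>_def)
qed




lemma freeze:
  fixes M F :: "'a measure" and X :: "'a \<Rightarrow> real" and Y :: "'a \<Rightarrow> real \<times> real"
    and T :: "(real \<times> real) measure" and g :: "real \<times> (real \<times> real) \<Rightarrow> real"
  assumes P: "prob_space M" and S: "sigma_finite_subalgebra M F"
    and X[measurable]: "X \<in> borel_measurable F"
    and Y[measurable]: "Y \<in> measurable M T"
    and ind: "prob_space.indep_set M (sets F) (sigma_sets (space M) {Y -` B \<inter> space M | B. B \<in> sets T})"
    and g[measurable]: "g \<in> borel_measurable (borel \<Otimes>\<^sub>M T)"
    and gb: "\<And>p. \<bar>g p\<bar> \<le> 1"
  shows "AE \<omega> in M. real_cond_exp M F (\<lambda>\<omega>. g (X \<omega>, Y \<omega>)) \<omega> = (\<integral>y. g (X \<omega>, y) \<partial>distr M T Y)"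
proof -
  interpret prob_space M by fact
  interpret sigma_finite_subalgebra M F by fact
  have sub: "subalgebra M F" by (rule subalg)
  have spF: "space F = space M" using sub by (simp add: subalgebra_def)
  have XM[measurable]: "X \<in> borel_measurable M" using X measurable_from_subalg[OF sub] by blast
  define Q where "Q = distr M T Y"
  interpret Q: prob_space Q unfolding Q_def by (rule prob_space_distr) simp
  define G where "G c = (\<integral>y. g (c, y) \<partial>Q)" for c
  have GM[measurable]: "G \<in> borel_measurable borel"
    unfolding G_def Q_def
    by (rule Q.borel_measurable_lebesgue_integral[unfolded Q_def, where f="\<lambda>c y. g (c,y)"]) simp
  have Gb: "\<bar>G c\<bar> \<le> 1" for c
  proof -
    have "\<bar>G c\<bar> \<le> (\<integral>y. \<bar>g (c, y)\<bar> \<partial>Q)" unfolding G_def by (rule integral_abs_bound)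
    also have "\<dots> \<le> (\<integral>y. 1 \<partial>Q)"
      by (intro integral_mono Q.integrable_const_bound[where B=1]) (auto simp: gb Q_def)
    finally show ?thesis by (simp add: Q.prob_space)
  qed
  have "AE \<omega> in M. real_cond_exp M F (\<lambda>\<omega>. g (X \<omega>, Y \<omega>)) \<omega> = G (X \<omega>)"
  proof (rule real_cond_exp_charact)
    show "integrable M (\<lambda>\<omega>. g (X \<omega>, Y \<omega>))"
      by (rule integrable_const_bound[where B=1]) (auto simp: gb)
    show "integrable M (\<lambda>\<omega>. G (X \<omega>))"
      by (rule integrable_const_bound[where B=1]) (auto simp: Gb real_norm_def)
    show "(\<lambda>\<omega>. G (X \<omega>)) \<in> borel_measurable F" by measurable
    fix A assume A[measurable]: "A \<in> sets F"
    define Xp where "Xp \<omega> = (indicator A \<omega> :: real, X \<omega>)" for \<omega>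
    have XpF[measurable]: "Xp \<in> measurable F (borel \<Otimes>\<^sub>M borel)" unfolding Xp_def by measurable
    have XpM[measurable]: "Xp \<in> measurable M (borel \<Otimes>\<^sub>M borel)"
      using XpF measurable_from_subalg[OF sub] by blast
    have "indep_var (borel \<Otimes>\<^sub>M borel) Xp T Y"
      unfolding indep_var_eq
    proof (intro conjI)
      show "random_variable (borel \<Otimes>\<^sub>M borel) Xp" "random_variable T Y" by simp_all
      have s1: "sigma_sets (space M) {Xp -` B \<inter> space M | B. B \<in> sets (borel \<Otimes>\<^sub>M borel)} \<subseteq> sets F"
      proof -
        have "{Xp -` B \<inter> space M | B. B \<in> sets (borel \<Otimes>\<^sub>M borel)} \<subseteq> sets F"
          using XpF spF by (auto simp: measurable_def)
        then have "sigma_sets (space M) {Xp -` B \<inter> space M | B. B \<in> sets (borel \<Otimes>\<^sub>M borel)} \<subseteq> sigma_sets (space F) (sets F)"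
          unfolding spF by (rule sigma_sets_subseteq)
        then show ?thesis by (simp add: sets.sigma_sets_eq)
      qed
      show "indep_set (sigma_sets (space M) {Xp -` B \<inter> space M | B. B \<in> sets (borel \<Otimes>\<^sub>M borel)})
          (sigma_sets (space M) {Y -` B \<inter> space M | B. B \<in> sets T})"
        unfolding indep_set_def
        by (rule indep_sets_mono_sets[OF ind[unfolded indep_set_def]]) (use s1 in \<open>auto split: bool.split\<close>)
    qed
    then have dist: "distr M (borel \<Otimes>\<^sub>M borel) Xp \<Otimes>\<^sub>M Q = distr M ((borel \<Otimes>\<^sub>M borel) \<Otimes>\<^sub>M T) (\<lambda>\<omega>. (Xp \<omega>, Y \<omega>))"
      unfolding indep_var_distribution_eq Q_def by blast
    interpret D: prob_space "distr M (borel \<Otimes>\<^sub>M borel) Xp" by (rule prob_space_distr) simp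
    interpret DQ: pair_prob_space "distr M (borel \<Otimes>\<^sub>M borel) Xp" Q ..
    define k where "k q = max 0 (min 1 (fst (fst q))) * g (snd (fst q), snd q)" for q :: "(real \<times> real) \<times> (real \<times> real)"
    have k[measurable]: "k \<in> borel_measurable ((borel \<Otimes>\<^sub>M borel) \<Otimes>\<^sub>M T)" unfolding k_def by measurable
    have "(\<integral>\<omega>\<in>A. g (X \<omega>, Y \<omega>) \<partial>M) = (\<integral>\<omega>. k (Xp \<omega>, Y \<omega>) \<partial>M)"
      unfolding set_lebesgue_integral_def k_def Xp_def by (intro Bochner_Integration.integral_cong refl) (auto simp: indicator_def)
    also have "\<dots> = integral\<^sup>L (distr M ((borel \<Otimes>\<^sub>M borel) \<Otimes>\<^sub>M T) (\<lambda>\<omega>. (Xp \<omega>, Y \<omega>))) k"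
      by (rule integral_distr[symmetric]) simp_all
    also have "\<dots> = integral\<^sup>L (distr M (borel \<Otimes>\<^sub>M borel) Xp \<Otimes>\<^sub>M Q) k" by (simp add: dist)
    also have "\<dots> = (\<integral>p. (\<integral>y. k (p, y) \<partial>Q) \<partial>distr M (borel \<Otimes>\<^sub>M borel) Xp)"
    proof (rule DQ.integral_fst'[symmetric])
      show "integrable (distr M (borel \<Otimes>\<^sub>M borel) Xp \<Otimes>\<^sub>M Q) k"
      proof (rule DQ.P.integrable_const_bound[where B=1])
        show "k \<in> borel_measurable (distr M (borel \<Otimes>\<^sub>M borel) Xp \<Otimes>\<^sub>M Q)"
          using k by (simp add: Q_def)
        have "\<bar>max 0 (min 1 (fst (fst q)))\<bar> * \<bar>g (snd (fst q), snd q)\<bar> \<le> 1 * 1" for q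
          by (intro mult_mono) (auto simp: gb)
        then show "AE q in distr M (borel \<Otimes>\<^sub>M borel) Xp \<Otimes>\<^sub>M Q. norm (k q) \<le> 1"
          by (auto simp: k_def abs_mult)
      qed
    qed
    also have "\<dots> = (\<integral>p. max 0 (min 1 (fst p)) * G (snd p) \<partial>distr M (borel \<Otimes>\<^sub>M borel) Xp)"
      unfolding k_def G_def by simp
    also have "\<dots> = (\<integral>\<omega>. max 0 (min 1 (fst (Xp \<omega>))) * G (snd (Xp \<omega>)) \<partial>M)"
      by (rule integral_distr) simp_all
    also have "\<dots> = (\<integral>\<omega>\<in>A. G (X \<omega>) \<partial>M)"
      unfolding set_lebesgue_integral_def Xp_def by (intro Bochner_Integration.integral_cong refl) (auto simp: indicator_def)
    finally show "(\<integral>\<omega>\<in>A. g (X \<omega>, Y \<omega>) \<partial>M) = (\<integral>\<omega>\<in>A. G (X \<omega>) \<partial>M)" .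
  qed
  then show ?thesis unfolding G_def Q_def .
qed

lemma layerB:
  assumes D: "\<Delta> > 0" and Lam: "\<Lambda> > 0"
    and P: "prob_space (density lborel (\<lambda>x. ennreal (laplace_density \<Delta> x)))"
  shows "(\<integral>y. (if \<Lambda> \<le> exp (c + snd y) * \<bar>fst y\<bar> then 1 else 0)
      \<partial>(density lborel (\<lambda>x. ennreal (std_normal_density x)) \<Otimes>\<^sub>M density lborel (\<lambda>x. ennreal (laplace_density \<Delta> x))))
    = Gform \<Delta> (\<Lambda> / (sqrt 2 * exp c))"
proof -
  have "\<Lambda> / (sqrt 2 * exp c) > 0" using Lam by simp
  then show ?thesis using layerB1[OF D Lam P, of c] layerB2[OF D] by simp
qed

lemma indep_split:
  fixes E :: "nat \<Rightarrow> 'a set set"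
  assumes P: "prob_space M" and ind: "prob_space.indep_sets M E {0, 1, 2}"
    and st: "\<And>i. Int_stable (E i)"
  shows "prob_space.indep_set M (sigma_sets (space M) (E 0)) (sigma_sets (space M) (E 1 \<union> E 2))"
    "prob_space.indep_set M (sigma_sets (space M) (E 1)) (sigma_sets (space M) (E 2))"
proof -
  interpret prob_space M by fact
  define I where "I b = (if b then {0::nat} else {1,2})" for b
  have "indep_sets (\<lambda>j. sigma_sets (space M) (\<Union>i\<in>I j. E i)) UNIV"
    by (rule indep_sets_collect_sigma) (use ind st in \<open>auto simp: I_def disjoint_family_on_def UNIV_bool insert_commute\<close>)
  then show "indep_set (sigma_sets (space M) (E 0)) (sigma_sets (space M) (E 1 \<union> E 2))"
    unfolding indep_set_def by (rule indep_sets_cong[THEN iffD1, rotated -1]) (auto simp: I_def split: bool.split)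
  define I2 where "I2 b = (if b then {1::nat} else {2})" for b
  have "indep_sets (\<lambda>j. sigma_sets (space M) (\<Union>i\<in>I2 j. E i)) UNIV"
    by (rule indep_sets_collect_sigma) (use ind st in \<open>auto simp: I2_def disjoint_family_on_def UNIV_bool insert_commute intro: indep_sets_mono_index\<close>)
  then show "indep_set (sigma_sets (space M) (E 1)) (sigma_sets (space M) (E 2))"
    unfolding indep_set_def by (rule indep_sets_cong[THEN iffD1, rotated -1]) (auto simp: I2_def split: bool.split)
qed

theorem theorem2p2:
  fixes M F :: "'a measure"
    and \<epsilon> H Hbar h z :: "'a \<Rightarrow> real"
    and \<Delta> \<Lambda> :: real
  assumes "prob_space M"
    and "sigma_finite_subalgebra M F"
    and Hbar_meas: "Hbar \<in> borel_measurable F"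
    and H_def: "\<And>\<omega>. \<omega> \<in> space M \<Longrightarrow> H \<omega> = Hbar \<omega> + h \<omega>"
    and eps_def: "\<And>\<omega>. \<omega> \<in> space M \<Longrightarrow> \<epsilon> \<omega> = exp (H \<omega>) * z \<omega>"
    and Delta_pos: "\<Delta> > 0"
    and h_laplace: "distributed M lborel h (\<lambda>x. ennreal (laplace_density \<Delta> x))"
    and z_normal: "distributed M lborel z (\<lambda>x. ennreal (std_normal_density x))"
    and indep: "prob_space.indep_sets M
        (\<lambda>i::nat. if i = 0 then sets F
                  else if i = 1 then {z -` A \<inter> space M | A. A \<in> sets borel}
                  else {h -` A \<inter> space M | A. A \<in> sets borel}) {0, 1, 2}"
    and Lambda_pos: "\<Lambda> > 0"
  shows "AE \<omega> in M.
     real_cond_exp M F (indicator {\<omega>' \<in> space M. \<bar>\<epsilon> \<omega>'\<bar> \<ge> \<Lambda>}) \<omega> =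
       (let L = \<Lambda> / (sqrt 2 * exp (Hbar \<omega>)) in
         1 / (2 * sqrt pi) *
           (lower_inc_gamma ((1 + 1 / \<Delta>) / 2) (L\<^sup>2) * L powr (- 1 / \<Delta>)
            - upper_inc_gamma ((1 - 1 / \<Delta>) / 2) (L\<^sup>2) * L powr (1 / \<Delta>))
         + erfc L)"
proof -
  interpret prob_space M by fact
  interpret sigma_finite_subalgebra M F by fact
  have sub: "subalgebra M F" by (rule subalg)
  have spF: "space F = space M" using sub by (simp add: subalgebra_def)
  have HbM[measurable]: "Hbar \<in> borel_measurable M" using Hbar_meas measurable_from_subalg[OF sub] by blast
  have zM[measurable]: "z \<in> borel_measurable M" using z_normal by (simp add: distributed_def)
  have hM[measurable]: "h \<in> borel_measurable M" using h_laplace by (simp add: distributed_def)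
  define E where "E = (\<lambda>i::nat. if i = 0 then sets F
                  else if i = 1 then {z -` A \<inter> space M | A. A \<in> sets borel}
                  else {h -` A \<inter> space M | A. A \<in> sets borel})"
  have st: "Int_stable (E i)" for i
  proof (cases "i = 0")
    case True then show ?thesis by (simp add: E_def sets.Int_stable)
  next
    case False
    show ?thesis unfolding E_def using False
      by (auto simp: Int_stable_def) (metis (no_types) sets.Int vimage_Int Int_assoc Int_absorb Int_left_commute)+
  qed
  note ind3 = indep_split[OF \<open>prob_space M\<close> indep[folded E_def] st]
  define Y where "Y \<omega> = (z \<omega>, h \<omega>)" for \<omega>
  have YM[measurable]: "Y \<in> measurable M (borel \<Otimes>\<^sub>M borel)" unfolding Y_def by measurable
  define g where "g p = (if \<Lambda> \<le> exp (fst p + snd (snd p)) * \<bar>fst (snd p)\<bar> then 1 else 0 :: real)" for p :: "real \<times> real \<times> real"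
  have gM[measurable]: "g \<in> borel_measurable (borel \<Otimes>\<^sub>M (borel \<Otimes>\<^sub>M borel))" unfolding g_def by measurable
  have indY: "indep_set (sets F) (sigma_sets (space M) {Y -` B \<inter> space M | B. B \<in> sets (borel \<Otimes>\<^sub>M borel)})"
  proof -
    have 1: "sigma_sets (space M) (E 0) = sets F"
      using sets.sigma_sets_eq[of F] by (simp add: E_def spF)
    define N where "N = sigma (space M) (E 1 \<union> E 2)"
    have EP: "E 1 \<union> E 2 \<subseteq> Pow (space M)" by (auto simp: E_def)
    have sN: "sets N = sigma_sets (space M) (E 1 \<union> E 2)" "space N = space M"
      using EP by (simp_all add: N_def)
    have "z \<in> measurable N borel"
      by (rule measurableI) (auto simp: sN E_def intro!: sigma_sets.Basic)
    moreover have "h \<in> measurable N borel"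
      by (rule measurableI) (auto simp: sN E_def intro!: sigma_sets.Basic)
    ultimately have "Y \<in> measurable N (borel \<Otimes>\<^sub>M borel)" unfolding Y_def by (rule measurable_Pair)
    then have "{Y -` B \<inter> space M | B. B \<in> sets (borel \<Otimes>\<^sub>M borel)} \<subseteq> sigma_sets (space M) (E 1 \<union> E 2)"
      by (auto simp: measurable_def sN)
    then have 2: "sigma_sets (space M) {Y -` B \<inter> space M | B. B \<in> sets (borel \<Otimes>\<^sub>M borel)} \<subseteq> sigma_sets (space M) (E 1 \<union> E 2)"
      by (rule sigma_sets_mono)
    show ?thesis
      unfolding indep_set_def
      by (rule indep_sets_mono_sets[OF ind3(1)[unfolded indep_set_def]]) (use 1 2 in \<open>auto split: bool.split\<close>)
  qed
  have "indep_var borel z borel h"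
    unfolding indep_var_eq using ind3(2) by (simp add: E_def)
  then have "distr M borel z \<Otimes>\<^sub>M distr M borel h = distr M (borel \<Otimes>\<^sub>M borel) Y"
    unfolding indep_var_distribution_eq Y_def by blast
  moreover have "distr M borel z = density lborel (\<lambda>x. ennreal (std_normal_density x))"
    using z_normal unfolding distributed_def by (metis distr_cong sets_lborel)
  moreover have dh: "distr M borel h = density lborel (\<lambda>x. ennreal (laplace_density \<Delta> x))"
    using h_laplace unfolding distributed_def by (metis distr_cong sets_lborel)
  ultimately have distY: "distr M (borel \<Otimes>\<^sub>M borel) Y = density lborel (\<lambda>x. ennreal (std_normal_density x)) \<Otimes>\<^sub>M density lborel (\<lambda>x. ennreal (laplace_density \<Delta> x))"
    by simp
  have Plap: "prob_space (density lborel (\<lambda>x. ennreal (laplace_density \<Delta> x)))"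
    using prob_space_distr[OF hM] dh by simp
  have fr: "AE \<omega> in M. real_cond_exp M F (\<lambda>\<omega>. g (Hbar \<omega>, Y \<omega>)) \<omega> = (\<integral>y. g (Hbar \<omega>, y) \<partial>distr M (borel \<Otimes>\<^sub>M borel) Y)"
    by (rule freeze[OF \<open>prob_space M\<close> \<open>sigma_finite_subalgebra M F\<close> Hbar_meas YM indY gM]) (simp add: g_def)
  have "AE \<omega> in M. real_cond_exp M F (indicator {\<omega>' \<in> space M. \<bar>\<epsilon> \<omega>'\<bar> \<ge> \<Lambda>}) \<omega> = real_cond_exp M F (\<lambda>\<omega>. g (Hbar \<omega>, Y \<omega>)) \<omega>"
  proof (rule real_cond_exp_cong)
    have "{\<omega>' \<in> space M. \<bar>\<epsilon> \<omega>'\<bar> \<ge> \<Lambda>} = {\<omega>' \<in> space M. \<Lambda> \<le> exp (Hbar \<omega>' + h \<omega>') * \<bar>z \<omega>'\<bar>}"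
      by (auto simp: eps_def H_def abs_mult)
    then show "AE x in M. indicator {\<omega>' \<in> space M. \<bar>\<epsilon> \<omega>'\<bar> \<ge> \<Lambda>} x = g (Hbar x, Y x)"
      by (auto simp: g_def Y_def indicator_def)
    show "indicator {\<omega>' \<in> space M. \<bar>\<epsilon> \<omega>'\<bar> \<ge> \<Lambda>} \<in> borel_measurable M"
      unfolding \<open>{\<omega>' \<in> space M. \<bar>\<epsilon> \<omega>'\<bar> \<ge> \<Lambda>} = _\<close> by measurable
    show "(\<lambda>\<omega>. g (Hbar \<omega>, Y \<omega>)) \<in> borel_measurable M" by measurable
  qed
  with fr show ?thesis
  proof eventually_elim
    case (elim \<omega>)
    have "(\<integral>y. g (Hbar \<omega>, y) \<partial>distr M (borel \<Otimes>\<^sub>M borel) Y) = Gform \<Delta> (\<Lambda> / (sqrt 2 * exp (Hbar \<omega>)))"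
      unfolding distY g_def using layerB[OF Delta_pos Lambda_pos Plap, of "Hbar \<omega>"] by simp
    with elim show ?case by (simp add: Gform_def Let_def)
  qed
qed


end
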